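(* Let $0<c\le1<F$ be constants. There is a constant $K_4>0$ (depending only on $c,F$) such that for every sufficiently small $\varepsilon>0$ there exists $s_1>0$ such that for all $s\ge s_1$ there is a constant $\delta>0$ with the following property for all sufficiently large $n$: at every time $t$ with $\varepsilon n/2\le Z^t\le\varepsilon n$, $$\mathbb E[G_4^{t+1}-G_4^t\mid x^t,\lambda^t]\ge\delta,$$ where $G_4^t=Z^t-K_4(\log_F\lambda^t+1)^2$.
   Context: Consider the SA-$(1,\lambda)$-EA on a dynamic monotone function: a function $f:\{0,1\}^n\to\mathbb R$ is monotone if $f(x)>f(y)$ whenever $x\ne y$ and $x_i\ge y_i$ for all $i$; $(f^t)_{t\ge0}$ is a sequence of monotone functions, $f^t$ possibly chosen adversarially depending on $x^t$. The algorithm (with constants $c>0$, $s>0$, $F>1$) maintains $x^t\in\{0,1\}^n$, real $\lambda^t\ge1$; in generation $t$ it creates $\lfloor\lambda^t\rceil$ (nearest integer) offspring, each independently by flipping every bit of $x^t$ independently with probability $c/n$; $x^{t+1}$ is an offspring maximizing $f^t$ (ties uniformly at random); $\lambda^{t+1}=\max\{1,\lambda^t/F\}$ if $f^t(x^{t+1})>f^t(x^t)$, else $\lambda^{t+1}=F^{1/s}\lambda^t$. $Z^t$ is the number of zero-bits of $x^t$. *)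

theory Defs
  imports "HOL-Probability.Probability"
begin

text \<open>Bit strings of length n are bool lists (True = one-bit, False = zero-bit).\<close>

definition bitstrings :: "nat \<Rightarrow> bool list set" where
  "bitstrings n = {x. length x = n}"

definition monotone_fun :: "nat \<Rightarrow> (bool list \<Rightarrow> real) \<Rightarrow> bool" where
  "monotone_fun n f \<longleftrightarrow>
     (\<forall>x\<in>bitstrings n. \<forall>y\<in>bitstrings n.
        x \<noteq> y \<and> (\<forall>i<n. y ! i \<longrightarrow> x ! i) \<longrightarrow> f x > f y)"

definition zeros :: "bool list \<Rightarrow> nat" where
  "zeros x = length (filter Not x)"

definition mutate :: "real \<Rightarrow> nat \<Rightarrow> bool list \<Rightarrow> bool list pmf" where
  "mutate c n x = map_pmf (\<lambda>m. map2 (\<noteq>) x m) (replicate_pmf (length x) (bernoulli_pmf (c / real n)))"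

definition select_best :: "(bool list \<Rightarrow> real) \<Rightarrow> bool list list \<Rightarrow> bool list pmf" where
  "select_best f ys =
     map_pmf (\<lambda>i. ys ! i)
       (pmf_of_set {i. i < length ys \<and> f (ys ! i) = Max (f ` set ys)})"

definition sa_step ::
  "real \<Rightarrow> real \<Rightarrow> real \<Rightarrow> nat \<Rightarrow> (bool list \<Rightarrow> real) \<Rightarrow> bool list \<Rightarrow> real \<Rightarrow> (bool list \<times> real) pmf" where
  "sa_step c s F n f x lam =
     do {
       ys \<leftarrow> replicate_pmf (nat (round lam)) (mutate c n x);
       x' \<leftarrow> select_best f ys;
       return_pmf (x', if f x' > f x then max 1 (lam / F) else F powr (1 / s) * lam)
     }"

definition G4 :: "real \<Rightarrow> real \<Rightarrow> bool list \<Rightarrow> real \<Rightarrow> real" where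
  "G4 F K x lam = real (zeros x) - K * (log F lam + 1)\<^sup>2"

end

theory Submission
  imports Defs
begin


lemma E_bind:
  fixes h :: "'b \<Rightarrow> real"
  assumes "finite (set_pmf p)" "\<And>a. a \<in> set_pmf p \<Longrightarrow> finite (set_pmf (f a))"
  shows "measure_pmf.expectation (p \<bind> f) h = measure_pmf.expectation p (\<lambda>a. measure_pmf.expectation (f a) h)"
  using pmf_expectation_bind[of "set_pmf p" f p h] integral_measure_pmf[of "set_pmf p" p "\<lambda>a. measure_pmf.expectation (f a) h"] assms by auto

lemma fin_rep: "finite (set_pmf p) \<Longrightarrow> finite (set_pmf (replicate_pmf n p))"
  using finite_lists_length_eq[of "set_pmf p" n] by (simp add: set_replicate_pmf lists_eq_set subset_iff)

lemma E_rep_prod: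
  fixes g :: "'a \<Rightarrow> real"
  assumes "finite (set_pmf p)"
  shows "measure_pmf.expectation (replicate_pmf k p) (\<lambda>ys. prod_list (map g ys)) = (measure_pmf.expectation p g)^k"
proof (induction k)
  case 0 then show ?case by simp
next
  case (Suc k)
  have "measure_pmf.expectation (replicate_pmf (Suc k) p) (\<lambda>ys. prod_list (map g ys))
     = measure_pmf.expectation p (\<lambda>x. measure_pmf.expectation (replicate_pmf k p) (\<lambda>xs. g x * prod_list (map g xs)))"
    using assms fin_rep[OF assms] by (simp add: E_bind)
  also have "\<dots> = measure_pmf.expectation p (\<lambda>x. g x * (measure_pmf.expectation p g)^k)"
    using Suc by simp
  also have "\<dots> = (measure_pmf.expectation p g)^Suc k" by simp
  finally show ?case .
qed

lemma E_rep_sum: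
  fixes g :: "'a \<Rightarrow> real"
  assumes "finite (set_pmf p)"
  shows "measure_pmf.expectation (replicate_pmf k p) (\<lambda>ys. sum_list (map g ys)) = k * measure_pmf.expectation p g"
proof (induction k)
  case 0 then show ?case by simp
next
  case (Suc k)
  have "measure_pmf.expectation (replicate_pmf (Suc k) p) (\<lambda>ys. sum_list (map g ys))
     = measure_pmf.expectation p (\<lambda>x. measure_pmf.expectation (replicate_pmf k p) (\<lambda>xs. g x + sum_list (map g xs)))"
    using assms fin_rep[OF assms] by (simp add: E_bind)
  also have "\<dots> = measure_pmf.expectation p (\<lambda>x. g x + k * measure_pmf.expectation p g)"
    using Suc fin_rep[OF assms] by (simp add: integrable_measure_pmf_finite)
  also have "\<dots> = Suc k * measure_pmf.expectation p g"
    using assms by (simp add: integrable_measure_pmf_finite algebra_simps)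
  finally show ?case .
qed

lemma E_rep2_prod:
  fixes g :: "'b \<Rightarrow> 'a \<Rightarrow> real"
  assumes "finite (set_pmf p)"
  shows "measure_pmf.expectation (replicate_pmf (length xs) p) (\<lambda>m. prod_list (map2 g xs m))
     = prod_list (map (\<lambda>x. measure_pmf.expectation p (g x)) xs)"
proof (induction xs)
  case Nil then show ?case by simp
next
  case (Cons a xs)
  have "measure_pmf.expectation (replicate_pmf (length (a#xs)) p) (\<lambda>m. prod_list (map2 g (a#xs) m))
     = measure_pmf.expectation p (\<lambda>x. measure_pmf.expectation (replicate_pmf (length xs) p) (\<lambda>ms. g a x * prod_list (map2 g xs ms)))"
    using assms fin_rep[OF assms] by (simp add: E_bind)
  also have "\<dots> = measure_pmf.expectation p (\<lambda>x. g a x * prod_list (map (\<lambda>x. measure_pmf.expectation p (g x)) xs))"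
    using Cons by simp
  also have "\<dots> = prod_list (map (\<lambda>x. measure_pmf.expectation p (g x)) (a#xs))" by simp
  finally show ?case .
qed



definition n01 :: "bool list \<Rightarrow> bool list \<Rightarrow> nat" where
  "n01 x y = length (filter (\<lambda>(a,b). \<not>a \<and> b) (zip x y))"
definition n10 :: "bool list \<Rightarrow> bool list \<Rightarrow> nat" where
  "n10 x y = length (filter (\<lambda>(a,b). a \<and> \<not>b) (zip x y))"

definition Pup :: "bool list \<Rightarrow> bool list \<Rightarrow> real" where
  "Pup x y = prod_list (map2 (\<lambda>a b. if a \<and> \<not>b then 0 else 1) x y)"
definition Pdn :: "bool list \<Rightarrow> bool list \<Rightarrow> real" where
  "Pdn x y = prod_list (map2 (\<lambda>a b. if \<not>a \<and> b then 0 else 1) x y)"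
definition Peq :: "bool list \<Rightarrow> bool list \<Rightarrow> real" where
  "Peq x y = prod_list (map2 (\<lambda>a b. if a = b then 1 else 0) x y)"
definition Pw :: "real \<Rightarrow> bool list \<Rightarrow> bool list \<Rightarrow> real" where
  "Pw F x y = prod_list (map2 (\<lambda>a b. if \<not>a \<and> b then F else 1) x y)"

lemma zdiff: "length x = length y \<Longrightarrow>
  real (zeros y) - real (zeros x) = real (n10 x y) - real (n01 x y)"
  by (induction x y rule: list_induct2) (auto simp: zeros_def n10_def n01_def)

lemma Pup_eq: "length x = length y \<Longrightarrow> Pup x y = (if n10 x y = 0 then 1 else 0)"
  by (induction x y rule: list_induct2) (auto simp: Pup_def n10_def)
lemma Pdn_eq: "length x = length y \<Longrightarrow> Pdn x y = (if n01 x y = 0 then 1 else 0)"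
  by (induction x y rule: list_induct2) (auto simp: Pdn_def n01_def)
lemma Peq_eq: "length x = length y \<Longrightarrow> Peq x y = (if x = y then 1 else 0)"
  by (induction x y rule: list_induct2) (auto simp: Peq_def)
lemma Pw_eq: "length x = length y \<Longrightarrow> Pw F x y = F ^ n01 x y"
  by (induction x y rule: list_induct2) (auto simp: Pw_def n01_def)

lemma both0: "length x = length y \<Longrightarrow> n10 x y = 0 \<Longrightarrow> n01 x y = 0 \<Longrightarrow> x = y"
  by (induction x y rule: list_induct2) (auto simp: n10_def n01_def split: if_splits)

lemma n10_0: "length x = length y \<Longrightarrow> n10 x y = 0 \<Longrightarrow> i < length x \<Longrightarrow> x ! i \<Longrightarrow> y ! i"
proof (induction x y arbitrary: i rule: list_induct2)
  case Nil then show ?case by simp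
next
  case (Cons a x b y) then show ?case by (cases i) (auto simp: n10_def split: if_splits)
qed

lemma map2_comp: "length x = length m \<Longrightarrow> map2 g x (map2 h x m) = map2 (\<lambda>a b. g a (h a b)) x m"
  by (induction x m rule: list_induct2) auto

lemma prod_if: "prod_list (map (\<lambda>a. if a then u else v) x) = (u::real) ^ (length x - zeros x) * v ^ zeros x"
proof (induction x)
  case Nil then show ?case by (simp add: zeros_def)
next
  case (Cons a x)
  have "zeros x \<le> length x" by (simp add: zeros_def)
  with Cons show ?case by (auto simp: zeros_def Suc_diff_le)
qed

lemma fin_mut: "finite (set_pmf (mutate c n x))"
  unfolding mutate_def by (simp add: fin_rep)

lemma E_mut:
  fixes g :: "bool \<Rightarrow> bool \<Rightarrow> real"
  shows "measure_pmf.expectation (mutate c n x) (\<lambda>y. prod_list (map2 g x y))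
     = prod_list (map (\<lambda>a. measure_pmf.expectation (bernoulli_pmf (c / real n)) (\<lambda>m. g a (a \<noteq> m))) x)"
proof -
  have "measure_pmf.expectation (mutate c n x) (\<lambda>y. prod_list (map2 g x y))
    = measure_pmf.expectation (replicate_pmf (length x) (bernoulli_pmf (c / real n)))
        (\<lambda>m. prod_list (map2 g x (map2 (\<noteq>) x m)))"
    by (simp add: mutate_def)
  also have "\<dots> = measure_pmf.expectation (replicate_pmf (length x) (bernoulli_pmf (c / real n)))
        (\<lambda>m. prod_list (map2 (\<lambda>a b. g a (a \<noteq> b)) x m))"
    by (intro integral_cong_AE) (auto simp: AE_measure_pmf_iff set_replicate_pmf map2_comp)
  also have "\<dots> = prod_list (map (\<lambda>a. measure_pmf.expectation (bernoulli_pmf (c / real n)) (\<lambda>m. g a (a \<noteq> m))) x)"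
    by (rule E_rep2_prod) simp
  finally show ?thesis .
qed

lemma set_mut: "y \<in> set_pmf (mutate c n x) \<Longrightarrow> length y = length x"
  by (auto simp: mutate_def set_replicate_pmf)

context
  fixes c :: real and n :: nat and x :: "bool list" and F :: real
  assumes p0: "0 \<le> c / real n" and p1: "c / real n \<le> 1"
begin

lemma E_Pup: "measure_pmf.expectation (mutate c n x) (Pup x) = (1 - c/n) ^ (length x - zeros x)"
proof -
  have "measure_pmf.expectation (mutate c n x) (Pup x) = prod_list (map (\<lambda>a. if a then 1 - c/n else 1) x)"
    unfolding Pup_def E_mut using p0 p1 by (intro arg_cong[where f=prod_list] map_cong) auto
  then show ?thesis by (simp add: prod_if)
qed

lemma E_Pdn: "measure_pmf.expectation (mutate c n x) (Pdn x) = (1 - c/n) ^ zeros x"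
proof -
  have "measure_pmf.expectation (mutate c n x) (Pdn x) = prod_list (map (\<lambda>a. if a then 1 else 1 - c/n) x)"
    unfolding Pdn_def E_mut using p0 p1 by (intro arg_cong[where f=prod_list] map_cong) auto
  then show ?thesis by (simp add: prod_if)
qed

lemma E_Peq: "measure_pmf.expectation (mutate c n x) (Peq x) = (1 - c/n) ^ length x"
proof -
  have "measure_pmf.expectation (mutate c n x) (Peq x) = prod_list (map (\<lambda>a. if a then 1 - c/n else 1 - c/n) x)"
    unfolding Peq_def E_mut using p0 p1 by (intro arg_cong[where f=prod_list] map_cong) auto
  then show ?thesis by (simp add: map_replicate_const)
qed

lemma E_Pw: "measure_pmf.expectation (mutate c n x) (Pw F x) = (F * (c/n) + (1 - c/n)) ^ zeros x"
proof -
  have "measure_pmf.expectation (mutate c n x) (Pw F x) = prod_list (map (\<lambda>a. if a then 1 else F * (c/n) + (1 - c/n)) x)"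
    unfolding Pw_def E_mut using p0 p1 by (intro arg_cong[where f=prod_list] map_cong) auto
  then show ?thesis by (simp add: prod_if)
qed

end


lemma n10_self: "n10 x x = 0"
  by (induction x) (auto simp: n10_def)

lemma E_mono_pmf:
  fixes g h :: "'a \<Rightarrow> real"
  assumes "finite (set_pmf p)" "\<And>a. a \<in> set_pmf p \<Longrightarrow> g a \<le> h a"
  shows "measure_pmf.expectation p g \<le> measure_pmf.expectation p h"
  using assms by (intro integral_mono_AE) (auto simp: integrable_measure_pmf_finite AE_measure_pmf_iff)

lemma sel_props:
  assumes "ys \<noteq> []"
  shows "finite (set_pmf (select_best f ys))"
    and "x' \<in> set_pmf (select_best f ys) \<Longrightarrow> x' \<in> set ys \<and> (\<forall>y\<in>set ys. f y \<le> f x')"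
proof -
  let ?S = "{i. i < length ys \<and> f (ys ! i) = Max (f ` set ys)}"
  have fin: "finite ?S" by simp
  have "Max (f ` set ys) \<in> f ` set ys" using assms by (intro Max_in) auto
  then obtain y where y: "y \<in> set ys" "f y = Max (f ` set ys)" by auto
  then obtain i where "i < length ys" "ys ! i = y" by (auto simp: in_set_conv_nth)
  then have ne: "?S \<noteq> {}" using y by auto
  have st: "set_pmf (select_best f ys) = (\<lambda>i. ys ! i) ` ?S"
    unfolding select_best_def using fin ne by simp
  show "finite (set_pmf (select_best f ys))" unfolding st by simp
  assume "x' \<in> set_pmf (select_best f ys)"
  then obtain j where j: "j < length ys" "f (ys ! j) = Max (f ` set ys)" "x' = ys ! j"
    unfolding st by auto
  then show "x' \<in> set ys \<and> (\<forall>y\<in>set ys. f y \<le> f x')" by auto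
qed

lemma NP_eq: "(\<And>y. y \<in> set ys \<Longrightarrow> u y = (if Q y then 1 else 0)) \<Longrightarrow>
   prod_list (map (\<lambda>y. 1 - u y) ys) = (if \<exists>y\<in>set ys. Q y then 0 else (1::real))"
  by (induction ys) auto

lemma AG_eq: "(\<And>y. y \<in> set ys \<Longrightarrow> u y = (if Q y then 1 else 0)) \<Longrightarrow>
   prod_list (map u ys) = (if \<forall>y\<in>set ys. Q y then 1 else (0::real))"
  by (induction ys) auto

lemma reduce:
  fixes c s F K lam :: real and n :: nat and f x
  and Zlow :: "bool list list \<Rightarrow> real"
  defines "k \<equiv> nat (round lam)" and "M \<equiv> mutate c n x" and "L \<equiv> log F lam"
  assumes x: "x \<in> bitstrings n" and lam: "lam \<ge> 1" and F: "F > 1" and s: "s > 0" and K: "K \<ge> 0"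
    and mon: "monotone_fun n f"
    and Z: "\<And>ys x'. ys \<in> set_pmf (replicate_pmf k M) \<Longrightarrow> x' \<in> set ys \<Longrightarrow> (\<forall>y\<in>set ys. f y \<le> f x') \<Longrightarrow>
              Zlow ys \<le> real (zeros x') - real (zeros x)"
  shows "measure_pmf.expectation (replicate_pmf k M) Zlow
      + K * (((L+1)^2 - (L + 1/s + 1)^2) + (((L+1)^2 - (max 0 (L-1) + 1)^2) - ((L+1)^2 - (L + 1/s + 1)^2))
             * (1 - (1 - measure_pmf.expectation M (\<lambda>y. Pup x y - Peq x y))^k))
      \<le> measure_pmf.expectation (sa_step c s F n f x lam) (\<lambda>(x', lam'). G4 F K x' lam' - G4 F K x lam)"
proof -
  define Ds where "Ds = (L+1)^2 - (max 0 (L-1) + 1)^2"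
  define Df where "Df = (L+1)^2 - (L + 1/s + 1)^2"
  define nl where "nl = (\<lambda>x'. if f x' > f x then max 1 (lam / F) else F powr (1 / s) * lam)"
  define NP where "NP = (\<lambda>ys. prod_list (map (\<lambda>y. 1 - (Pup x y - Peq x y)) ys))"
  have L0: "L \<ge> 0" unfolding L_def using lam F by simp
  have DsDf: "Df \<le> Ds"
  proof -
    have "0 \<le> max 0 (L-1) + 1" "max 0 (L-1) + 1 \<le> L + 1" using L0 by auto
    then have "(max 0 (L-1) + 1)^2 \<le> (L+1)^2" by (intro power_mono) auto
    moreover have "(L+1)^2 \<le> (L + 1/s + 1)^2" using L0 s by (intro power_mono) auto
    ultimately show ?thesis unfolding Ds_def Df_def by simp
  qed
  have k1: "k \<ge> 1" unfolding k_def using lam by (simp add: round_def) linarith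
  have lenx: "length x = n" using x by (simp add: bitstrings_def)
  have finM: "finite (set_pmf M)" unfolding M_def by (rule fin_mut)
  have finR: "finite (set_pmf (replicate_pmf k M))" by (rule fin_rep[OF finM])
  have ne: "ys \<noteq> []" if "ys \<in> set_pmf (replicate_pmf k M)" for ys
    using that k1 by (auto simp: set_replicate_pmf)
  have step: "sa_step c s F n f x lam = replicate_pmf k M \<bind> (\<lambda>ys. select_best f ys \<bind> (\<lambda>x'. return_pmf (x', nl x')))"
    unfolding sa_step_def k_def M_def nl_def by simp
  have E1: "measure_pmf.expectation (sa_step c s F n f x lam) (\<lambda>(x', lam'). G4 F K x' lam' - G4 F K x lam)
     = measure_pmf.expectation (replicate_pmf k M)
         (\<lambda>ys. measure_pmf.expectation (select_best f ys) (\<lambda>x'. G4 F K x' (nl x') - G4 F K x lam))"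
    unfolding step using finR sel_props(1)[OF ne]
    by (subst E_bind) (auto intro!: integral_cong_AE simp: AE_measure_pmf_iff E_bind)
  have pw: "Zlow ys + K * (Df + (Ds - Df) * (1 - NP ys)) \<le> G4 F K x' (nl x') - G4 F K x lam"
    if ys: "ys \<in> set_pmf (replicate_pmf k M)" and x': "x' \<in> set_pmf (select_best f ys)" for ys x'
  proof -
    have x'p: "x' \<in> set ys" "\<forall>y\<in>set ys. f y \<le> f x'" using sel_props(2)[OF ne[OF ys] x'] by auto
    have Zl: "Zlow ys \<le> real (zeros x') - real (zeros x)" using Z[OF ys x'p] .
    have lens: "\<And>y. y \<in> set ys \<Longrightarrow> length y = n"
      using ys lenx set_mut unfolding M_def by (auto simp: set_replicate_pmf)
    have NPe: "NP ys = (if \<exists>y\<in>set ys. n10 x y = 0 \<and> x \<noteq> y then 0 else 1)"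
      unfolding NP_def
    proof (rule NP_eq)
      fix y assume "y \<in> set ys"
      then have "length x = length y" using lens lenx by auto
      then show "Pup x y - Peq x y = (if n10 x y = 0 \<and> x \<noteq> y then 1 else 0)"
        by (auto simp: Pup_eq Peq_eq n10_self)
    qed
    have G: "G4 F K x' (nl x') - G4 F K x lam = (real (zeros x') - real (zeros x)) + K * ((L+1)^2 - (log F (nl x') + 1)^2)"
      unfolding G4_def L_def by (simp add: algebra_simps)
    have succ: "log F (nl x') = max 0 (L-1)" if "f x' > f x"
    proof (cases "lam / F \<ge> 1")
      case True
      then have "log F (nl x') = log F (lam / F)" using that by (simp add: nl_def)
      also have "\<dots> = L - 1" unfolding L_def using F lam by (simp add: log_divide_pos)
      finally show ?thesis using True F lam L_def by auto
    next
      case False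
      then have "log F (nl x') = 0" using that by (simp add: nl_def)
      moreover have "L < 1" unfolding L_def using False F lam by simp
      ultimately show ?thesis by simp
    qed
    have fail: "log F (nl x') = L + 1/s" if "\<not> f x' > f x"
    proof -
      have "log F (nl x') = log F (F powr (1/s) * lam)" using that by (simp add: nl_def)
      also have "\<dots> = 1/s + L" unfolding L_def using F lam by (simp add: log_mult)
      finally show ?thesis by simp
    qed
    show ?thesis
    proof (cases "\<exists>y\<in>set ys. n10 x y = 0 \<and> x \<noteq> y")
      case True
      then obtain y where y: "y \<in> set ys" "n10 x y = 0" "x \<noteq> y" by auto
      have ly: "length y = n" using lens y by auto
      have "f y > f x"
        using mon x ly y lenx n10_0[of x y] unfolding monotone_fun_def bitstrings_def by auto
      then have "f x' > f x" using x'p y by force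
      then have "log F (nl x') = max 0 (L-1)" by (rule succ)
      then show ?thesis using G Zl NPe True K unfolding Ds_def by simp
    next
      case False
      have "Df \<le> (L+1)^2 - (log F (nl x') + 1)^2"
        using succ fail DsDf unfolding Ds_def Df_def by (cases "f x' > f x") auto
      then have "K * Df \<le> K * ((L+1)^2 - (log F (nl x') + 1)^2)" using K by (rule mult_left_mono)
      then show ?thesis using G Zl NPe False by simp
    qed
  qed
  have E2: "measure_pmf.expectation (replicate_pmf k M) (\<lambda>ys. Zlow ys + K * (Df + (Ds - Df) * (1 - NP ys)))
     \<le> measure_pmf.expectation (sa_step c s F n f x lam) (\<lambda>(x', lam'). G4 F K x' lam' - G4 F K x lam)"
    unfolding E1
  proof (rule E_mono_pmf[OF finR])
    fix ys assume ys: "ys \<in> set_pmf (replicate_pmf k M)"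
    have "measure_pmf.expectation (select_best f ys) (\<lambda>_. Zlow ys + K * (Df + (Ds - Df) * (1 - NP ys)))
       \<le> measure_pmf.expectation (select_best f ys) (\<lambda>x'. G4 F K x' (nl x') - G4 F K x lam)"
      by (rule E_mono_pmf[OF sel_props(1)[OF ne[OF ys]]]) (rule pw[OF ys])
    then show "Zlow ys + K * (Df + (Ds - Df) * (1 - NP ys))
       \<le> measure_pmf.expectation (select_best f ys) (\<lambda>x'. G4 F K x' (nl x') - G4 F K x lam)" by simp
  qed
  have ENP: "measure_pmf.expectation (replicate_pmf k M) NP = (1 - measure_pmf.expectation M (\<lambda>y. Pup x y - Peq x y))^k"
    unfolding NP_def E_rep_prod[OF finM] using finM by (simp add: integrable_measure_pmf_finite)
  have E3: "measure_pmf.expectation (replicate_pmf k M) (\<lambda>ys. Zlow ys + K * (Df + (Ds - Df) * (1 - NP ys)))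
     = measure_pmf.expectation (replicate_pmf k M) Zlow + K * (Df + (Ds - Df) * (1 - measure_pmf.expectation (replicate_pmf k M) NP))"
    using finR by (simp add: integrable_measure_pmf_finite algebra_simps)
  have "measure_pmf.expectation (replicate_pmf k M) Zlow + K * (Df + (Ds - Df) * (1 - (1 - measure_pmf.expectation M (\<lambda>y. Pup x y - Peq x y))^k))
     \<le> measure_pmf.expectation (sa_step c s F n f x lam) (\<lambda>(x', lam'). G4 F K x' lam' - G4 F K x lam)"
    using E2 by (simp only: E3 ENP)
  then show ?thesis by (simp only: Ds_def Df_def)
qed



lemma mem_le_sum_list: "y \<in> set ys \<Longrightarrow> (\<And>y. y \<in> set ys \<Longrightarrow> g y \<ge> 0) \<Longrightarrow> g y \<le> sum_list (map g ys)"
  for g :: "'a \<Rightarrow> real"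
proof (induction ys)
  case Nil then show ?case by simp
next
  case (Cons a ys)
  have "0 \<le> sum_list (map g ys)" using Cons.prems(2) by (intro sum_list_nonneg) auto
  show ?case
  proof (cases "y = a")
    case True
    then show ?thesis using \<open>0 \<le> sum_list (map g ys)\<close> by simp
  next
    case False
    then have "y \<in> set ys" using Cons.prems by simp
    then have "g y \<le> sum_list (map g ys)" using Cons by simp
    moreover have "0 \<le> g a" using Cons.prems(2) by simp
    ultimately show ?thesis by simp
  qed
qed

lemma n01_self: "n01 x x = 0"
  by (induction x) (auto simp: n01_def)

lemma bern_F: "F > 1 \<Longrightarrow> real m \<le> (F ^ m - 1) / (F - 1)"
  using Bernoulli_inequality[of "F - 1" m] by (simp add: field_simps)

context
  fixes c F :: real and n k :: nat and x :: "bool list"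
  assumes x: "x \<in> bitstrings n" and F: "F > 1" and p0: "0 \<le> c / real n" and p1: "c / real n \<le> 1"
begin

lemma lenx: "length x = n" using x by (simp add: bitstrings_def)

lemma lens: "ys \<in> set_pmf (replicate_pmf k (mutate c n x)) \<Longrightarrow> y \<in> set ys \<Longrightarrow> length y = length x"
  using set_mut by (auto simp: set_replicate_pmf)

lemma dz: "ys \<in> set_pmf (replicate_pmf k (mutate c n x)) \<Longrightarrow> x' \<in> set ys \<Longrightarrow>
   - ((Pw F x x' - 1) / (F - 1)) \<le> real (zeros x') - real (zeros x)"
  using zdiff[of x x'] lens[of ys x'] Pw_eq[of x x' F] bern_F[OF F, of "n01 x x'"] by auto

lemma Pw_ge: "length x = length y \<Longrightarrow> 0 \<le> (Pw F x y - 1) / (F - 1)"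
  using Pw_eq[of x y F] F by (simp add: one_le_power)

definition Z1 where "Z1 ys = - sum_list (map (\<lambda>y. (Pw F x y - 1) / (F - 1)) ys)"

lemma Z1_ok: "ys \<in> set_pmf (replicate_pmf k (mutate c n x)) \<Longrightarrow> x' \<in> set ys \<Longrightarrow>
   Z1 ys \<le> real (zeros x') - real (zeros x)"
  using dz[of ys x'] mem_le_sum_list[of x' ys "\<lambda>y. (Pw F x y - 1) / (F - 1)"] Pw_ge lens[of ys]
  unfolding Z1_def by force

lemma Z1_E: "measure_pmf.expectation (replicate_pmf k (mutate c n x)) Z1
   = - (k * (((F * (c/n) + (1 - c/n)) ^ zeros x - 1) / (F - 1)))"
proof -
  have "measure_pmf.expectation (replicate_pmf k (mutate c n x)) Z1
    = - measure_pmf.expectation (replicate_pmf k (mutate c n x)) (\<lambda>ys. sum_list (map (\<lambda>y. (Pw F x y - 1) / (F - 1)) ys))"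
    unfolding Z1_def by simp
  also have "\<dots> = - (k * measure_pmf.expectation (mutate c n x) (\<lambda>y. (Pw F x y - 1) / (F - 1)))"
    by (simp add: E_rep_sum[OF fin_mut])
  also have "measure_pmf.expectation (mutate c n x) (\<lambda>y. (Pw F x y - 1) / (F - 1))
      = (measure_pmf.expectation (mutate c n x) (Pw F x) - 1) / (F - 1)"
    using fin_mut by (simp add: integrable_measure_pmf_finite diff_divide_distrib)
  finally show ?thesis using E_Pw[OF p0 p1] by simp
qed

definition Z2 where "Z2 ys = prod_list (map (\<lambda>y. Pdn x y - Peq x y) ys) + Z1 ys"

lemma Z2_ok: "ys \<in> set_pmf (replicate_pmf k (mutate c n x)) \<Longrightarrow> x' \<in> set ys \<Longrightarrow>
   Z2 ys \<le> real (zeros x') - real (zeros x)"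
proof -
  assume ys: "ys \<in> set_pmf (replicate_pmf k (mutate c n x))" and x': "x' \<in> set ys"
  have AG: "prod_list (map (\<lambda>y. Pdn x y - Peq x y) ys) = (if \<forall>y\<in>set ys. n01 x y = 0 \<and> x \<noteq> y then 1 else 0)"
  proof (rule AG_eq)
    fix y assume "y \<in> set ys"
    then have "length x = length y" using lens[OF ys] by auto
    then show "Pdn x y - Peq x y = (if n01 x y = 0 \<and> x \<noteq> y then 1 else 0)"
      by (auto simp: Pdn_eq Peq_eq n01_self)
  qed
  have S0: "0 \<le> sum_list (map (\<lambda>y. (Pw F x y - 1) / (F - 1)) ys)"
    using Pw_ge lens[OF ys] by (intro sum_list_nonneg) auto
  show ?thesis
  proof (cases "\<forall>y\<in>set ys. n01 x y = 0 \<and> x \<noteq> y")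
    case True
    then have "n01 x x' = 0" "x \<noteq> x'" using x' by auto
    moreover have lx: "length x = length x'" using lens[OF ys x'] by auto
    ultimately have "n10 x x' \<noteq> 0" using both0 by blast
    then have "1 \<le> real (zeros x') - real (zeros x)" using zdiff[OF lx] \<open>n01 x x' = 0\<close> by simp
    then show ?thesis using AG True S0 unfolding Z2_def Z1_def by simp
  next
    case False
    have "prod_list (map (\<lambda>y. Pdn x y - Peq x y) ys) = 0" using AG False by simp
    then show ?thesis using Z1_ok[OF ys x'] unfolding Z2_def by simp
  qed
qed

lemma Z2_E: "measure_pmf.expectation (replicate_pmf k (mutate c n x)) Z2
   = ((1 - c/n) ^ zeros x - (1 - c/n) ^ n) ^ k - (k * (((F * (c/n) + (1 - c/n)) ^ zeros x - 1) / (F - 1)))"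
proof -
  have fr: "finite (set_pmf (replicate_pmf k (mutate c n x)))" by (rule fin_rep[OF fin_mut])
  have "measure_pmf.expectation (replicate_pmf k (mutate c n x)) Z2
     = measure_pmf.expectation (replicate_pmf k (mutate c n x)) (\<lambda>ys. prod_list (map (\<lambda>y. Pdn x y - Peq x y) ys))
       + measure_pmf.expectation (replicate_pmf k (mutate c n x)) Z1"
    unfolding Z2_def using fr by (simp add: integrable_measure_pmf_finite)
  also have "measure_pmf.expectation (replicate_pmf k (mutate c n x)) (\<lambda>ys. prod_list (map (\<lambda>y. Pdn x y - Peq x y) ys))
     = (measure_pmf.expectation (mutate c n x) (\<lambda>y. Pdn x y - Peq x y)) ^ k"
    by (rule E_rep_prod[OF fin_mut])
  also have "measure_pmf.expectation (mutate c n x) (\<lambda>y. Pdn x y - Peq x y) = (1 - c/n) ^ zeros x - (1 - c/n) ^ n"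
    using fin_mut E_Pdn[OF p0 p1] E_Peq[OF p0 p1] lenx by (simp add: integrable_measure_pmf_finite)
  finally show ?thesis using Z1_E by simp
qed

definition Z3 where "Z3 ys = - log F (sum_list (map (Pw F x) ys))"

lemma Z3_ok: "ys \<in> set_pmf (replicate_pmf k (mutate c n x)) \<Longrightarrow> x' \<in> set ys \<Longrightarrow>
   Z3 ys \<le> real (zeros x') - real (zeros x)"
proof -
  assume ys: "ys \<in> set_pmf (replicate_pmf k (mutate c n x))" and x': "x' \<in> set ys"
  have lx: "length x = length x'" using lens[OF ys x'] by auto
  have "Pw F x x' \<le> sum_list (map (Pw F x) ys)"
    using Pw_eq lens[OF ys] F by (intro mem_le_sum_list[OF x']) auto
  then have "F ^ n01 x x' \<le> sum_list (map (Pw F x) ys)" using Pw_eq[OF lx] by simp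
  moreover have "0 < F ^ n01 x x'" using F by simp
  ultimately have "0 < sum_list (map (Pw F x) ys)" by linarith
  then have "log F (F ^ n01 x x') \<le> log F (sum_list (map (Pw F x) ys))"
    using F \<open>F ^ n01 x x' \<le> sum_list (map (Pw F x) ys)\<close> by (subst log_le_cancel_iff) auto
  then have "real (n01 x x') \<le> log F (sum_list (map (Pw F x) ys))"
    using F by (simp add: log_nat_power)
  then show ?thesis using zdiff[OF lx] unfolding Z3_def by simp
qed

lemma Z3_E:
  assumes k: "k \<ge> 1" and A: "real k * (F * (c/n) + (1 - c/n)) ^ zeros x \<le> A"
  shows "- log F A \<le> measure_pmf.expectation (replicate_pmf k (mutate c n x)) Z3"
proof -
  have fr: "finite (set_pmf (replicate_pmf k (mutate c n x)))" by (rule fin_rep[OF fin_mut])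
  define Y where "Y = (\<lambda>ys. sum_list (map (Pw F x) ys))"
  have EY: "measure_pmf.expectation (replicate_pmf k (mutate c n x)) Y = real k * (F * (c/n) + (1 - c/n)) ^ zeros x"
    unfolding Y_def by (simp add: E_rep_sum[OF fin_mut] E_Pw[OF p0 p1])
  have "0 \<le> (F - 1) * (c/n)" using F p0 by (intro mult_nonneg_nonneg) auto
  moreover have "(F - 1) * (c/n) = F * (c/n) - c/n" by (simp only: left_diff_distrib)
  ultimately have base: "0 < F * (c/n) + (1 - c/n)" by linarith
  have "0 < real k * (F * (c/n) + (1 - c/n)) ^ zeros x" using k base by simp
  then have A0: "A > 0" using A by linarith
  have Ypos: "Y ys > 0" if ys: "ys \<in> set_pmf (replicate_pmf k (mutate c n x))" for ys
  proof -
    have "ys \<noteq> []" using ys k by (auto simp: set_replicate_pmf)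
    then obtain y where y: "y \<in> set ys" by (cases ys) auto
    have "Pw F x y > 0" using Pw_eq[of x y F] lens[OF ys y] F by simp
    moreover have "Pw F x y \<le> Y ys" unfolding Y_def
      using Pw_eq lens[OF ys] F by (intro mem_le_sum_list[OF y]) auto
    ultimately show ?thesis by simp
  qed
  have lnF: "ln F > 0" using F by simp
  have pt: "log F (Y ys) \<le> log F A + (Y ys / A - 1) / ln F" if ys: "ys \<in> set_pmf (replicate_pmf k (mutate c n x))" for ys
  proof -
    have "ln (Y ys / A) \<le> Y ys / A - 1" using Ypos[OF ys] A0 by (intro ln_le_minus_one) simp
    then have "ln (Y ys) - ln A \<le> Y ys / A - 1" using Ypos[OF ys] A0 by (simp add: ln_div)
    then have "(ln (Y ys) - ln A) / ln F \<le> (Y ys / A - 1) / ln F" using lnF by (simp add: divide_right_mono)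
    then show ?thesis by (simp add: log_def diff_divide_distrib)
  qed
  have "measure_pmf.expectation (replicate_pmf k (mutate c n x)) (\<lambda>ys. log F (Y ys))
     \<le> measure_pmf.expectation (replicate_pmf k (mutate c n x)) (\<lambda>ys. log F A + (Y ys / A - 1) / ln F)"
    by (rule E_mono_pmf[OF fr pt])
  also have "\<dots> = log F A + (measure_pmf.expectation (replicate_pmf k (mutate c n x)) Y / A - 1) / ln F"
    using fr by (simp add: integrable_measure_pmf_finite diff_divide_distrib)
  also have "\<dots> \<le> log F A"
  proof -
    have "measure_pmf.expectation (replicate_pmf k (mutate c n x)) Y / A \<le> 1" using EY A A0 by simp
    then show ?thesis using lnF by (simp add: divide_nonpos_pos)
  qed
  finally show ?thesis unfolding Z3_def Y_def by simp
qed

end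


lemma R5: "0 \<le> p \<Longrightarrow> p \<le> 1 \<Longrightarrow> 1 - p * m \<le> (1 - p::real) ^ m"
  using Bernoulli_inequality[of "-p" m] by (simp add: algebra_simps)

lemma R1: assumes "0 \<le> p" "p \<le> 1" shows "(1 - p::real) ^ m \<le> 1 / (1 + p * m)"
proof -
  have "(1 - p) ^ m * (1 + p) ^ m = (1 - p^2) ^ m" by (simp add: power_mult_distrib[symmetric] power2_eq_square algebra_simps)
  also have "\<dots> \<le> 1"
  proof (rule power_le_one)
    have "p^2 \<le> 1" using assms by (simp add: power_le_one)
    then show "0 \<le> 1 - p^2" by simp
    show "1 - p^2 \<le> 1" by simp
  qed
  finally have a: "(1 - p) ^ m * (1 + p) ^ m \<le> 1" .
  have b: "1 + p * m \<le> (1 + p) ^ m" using Bernoulli_inequality[of p m] assms by (simp add: algebra_simps)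
  have "(1 - p) ^ m * (1 + p * m) \<le> (1 - p) ^ m * (1 + p) ^ m"
    using b assms by (intro mult_left_mono) auto
  then have "(1 - p) ^ m * (1 + p * m) \<le> 1" using a by linarith
  moreover have "0 < 1 + p * m" using assms by (simp add: add_pos_nonneg)
  ultimately show ?thesis by (simp add: field_simps)
qed

lemma R1': assumes "0 \<le> p" "p \<le> 1" shows "p * m / (1 + p * m) \<le> 1 - (1 - p::real) ^ m"
proof -
  have "0 < 1 + p * m" using assms by (simp add: add_pos_nonneg)
  then have "1 - 1 / (1 + p * m) = p * m / (1 + p * m)" by (simp add: field_simps)
  then show ?thesis using R1[OF assms, of m] by linarith
qed

lemma R2: assumes "0 \<le> p" "p \<le> 1/2" shows "exp (- 2 * p * m) \<le> (1 - p::real) ^ m"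
proof -
  have "ln (1 - p) \<ge> - p - 2 * p^2" using ln_one_minus_pos_lower_bound[OF assms] .
  moreover have "p * (2 * p) \<le> p * 1" using assms by (intro mult_left_mono) auto
  then have "2 * p^2 \<le> p" by (simp add: power2_eq_square)
  ultimately have "ln (1 - p) \<ge> - 2 * p" by linarith
  then have "exp (- 2 * p) \<le> 1 - p" using assms by (subst ln_ge_iff[symmetric]) auto
  then have "exp (- 2 * p) ^ m \<le> (1 - p) ^ m" by (intro power_mono) auto
  then show ?thesis by (simp add: exp_of_nat_mult[symmetric] mult.commute)
qed

lemma R3: assumes "0 \<le> t" shows "(1 + t::real) ^ m \<le> exp (t * m)"
proof -
  have "(1 + t) ^ m \<le> exp t ^ m" using assms by (intro power_mono) auto
  then show ?thesis by (simp add: exp_of_nat_mult[symmetric] mult.commute)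
qed

lemma R4: "0 \<le> u \<Longrightarrow> u \<le> 1 \<Longrightarrow> exp u \<le> 1 + 2 * (u::real)"
proof -
  assume a: "0 \<le> u" "u \<le> 1"
  have "u * u \<le> u * 1" using a by (intro mult_left_mono) auto
  then show ?thesis using exp_bound[OF a] by (simp add: power2_eq_square)
qed

lemma exp2: "exp (-2::real) \<ge> 1/9"
proof -
  have "exp (1::real) \<le> 3" using R4[of 1] by simp
  then have "exp (1::real) * exp 1 \<le> 3 * 3" by (intro mult_mono) auto
  then have "exp (2::real) \<le> 9" by (simp add: exp_add[symmetric])
  then show ?thesis by (simp add: exp_minus field_simps)
qed

lemma R6: assumes "0 \<le> q" "q \<le> 1" shows "q * k / (1 + q * k) \<le> 1 - (1 - q::real) ^ k"
  using R1'[OF assms] .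



lemma core:
  fixes c F K eps s gam lam :: real and k0 n :: nat and x f
  assumes c0: "0 < c" and c1: "c \<le> 1" and F: "1 < F"
    and K1: "100 \<le> K" and K2: "8 * log F 6 + 8 \<le> K"
    and k0: "2 * F \<le> real k0"
    and gam: "gam = c / 8"
    and e0: "0 < eps" and e1: "eps \<le> 1 / F" and e2: "8 * real k0 * eps \<le> gam ^ k0"
    and s1: "4 \<le> s" and s2: "4 * K * (2 * log F (real k0 + 1) + 3) / gam ^ k0 \<le> s"
    and s3: "K * (2 * log F (72 / (c * eps)) + 3) / (c * eps) \<le> s"
    and n2: "2 \<le> n" and x: "x \<in> bitstrings n" and lam: "1 \<le> lam" and mon: "monotone_fun n f"
    and z1: "eps * real n / 2 \<le> real (zeros x)" and z2: "real (zeros x) \<le> eps * real n"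
  shows "min (gam ^ k0 / 2) (c * eps) \<le> measure_pmf.expectation (sa_step c s F n f x lam)
                  (\<lambda>(x', lam'). G4 F K x' lam' - G4 F K x lam)"
proof -
  define p where "p = c / real n"
  define z where "z = zeros x"
  define k where "k = nat (round lam)"
  define L where "L = log F lam"
  define Ds where "Ds = (L+1)^2 - (max 0 (L-1) + 1)^2"
  define Df where "Df = (L+1)^2 - (L + 1/s + 1)^2"
  define W where "W = F * p + (1 - p)"
  define q where "q = measure_pmf.expectation (mutate c n x) (\<lambda>y. Pup x y - Peq x y)"
  define E where "E = measure_pmf.expectation (sa_step c s F n f x lam) (\<lambda>(x', lam'). G4 F K x' lam' - G4 F K x lam)"
  have lenx: "length x = n" using x by (simp add: bitstrings_def)
  have zn: "z \<le> n" unfolding z_def zeros_def using lenx by (metis length_filter_le)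
  have p0: "0 < p" and p1: "p \<le> 1/2" unfolding p_def using c0 c1 n2 by (auto simp: field_simps)
  have pz1: "c * eps / 2 \<le> p * z" unfolding p_def z_def using z1 c0 n2
    by (simp add: field_simps)
  have pz2: "p * z \<le> c * eps" unfolding p_def z_def using z2 c0 n2
    by (simp add: field_simps)
  have pz0: "0 \<le> p * z" using p0 by simp
  have eps8: "eps \<le> 1/8"
  proof -
    have "gam ^ k0 \<le> 1" using gam c0 c1 by (intro power_le_one) auto
    moreover have "1 \<le> real k0" using k0 F by linarith
    moreover have "8 * eps * 1 \<le> 8 * eps * real k0" using e0 \<open>1 \<le> real k0\<close> by (intro mult_left_mono) auto
    ultimately have "8 * eps \<le> 1" using e2 by (simp add: mult.commute mult.left_commute)
    then show ?thesis by simp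
  qed
  have ce2: "c * eps \<le> c" using c0 eps8 by (simp add: mult_le_cancel_left1)
  have ce1: "c * eps \<le> eps" using c1 e0 by (simp add: mult_le_cancel_right1)
  have fl1: "of_int \<lfloor>lam + 1/2\<rfloor> \<le> lam + 1/2" by (rule of_int_floor_le)
  have fl2: "lam + 1/2 < of_int \<lfloor>lam + 1/2\<rfloor> + 1" by (rule real_of_int_floor_add_one_gt)
  have fl3: "1 \<le> \<lfloor>lam + 1/2\<rfloor>" using lam by linarith
  have kr: "real k = of_int \<lfloor>lam + 1/2\<rfloor>" unfolding k_def round_def using fl3 by simp
  have k1: "1 \<le> k" using kr fl3 by linarith
  have kup: "real k \<le> lam + 1/2" using kr fl1 by linarith
  have klo: "lam - 1/2 < real k" using kr fl2 by linarith
  have L0: "0 \<le> L" unfolding L_def using lam F by simp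
  have s0: "0 < s" using s1 by simp
  have K0: "0 \<le> K" using K1 by simp
  have Dfle: "Df \<le> 0" unfolding Df_def using L0 s0 by (intro diff_le_0_iff_le[THEN iffD2] power_mono) auto
  have Dfb: "- (2 * L + 3) / s \<le> Df"
  proof -
    have "Df = - (2 * (L + 1) / s + 1 / s^2)" unfolding Df_def using s0 by (simp add: power2_eq_square field_simps)
    moreover have "1 / s^2 \<le> 1 / s" using s1 by (simp add: power2_eq_square field_simps)
    moreover have "-(2*L+3)/s = -(2*(L+1)/s) - 1/s" using s0 by (simp add: field_simps)
    ultimately show ?thesis by linarith
  qed
  have Ds0: "0 \<le> Ds" unfolding Ds_def using L0 by (intro diff_ge_0_iff_ge[THEN iffD2] power_mono) auto
  have Ds1: "1 \<le> L \<Longrightarrow> Ds = 2 * L + 1" unfolding Ds_def by (simp add: power2_eq_square algebra_simps)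
  have pp0: "0 \<le> c / real n" "c / real n \<le> 1" using p0 p1 unfolding p_def by linarith+
  have qform: "q = (1 - p) ^ (n - z) * (1 - (1 - p) ^ z)"
  proof -
    have "q = (1 - p) ^ (n - z) - (1 - p) ^ n"
      unfolding q_def using fin_mut E_Pup[OF pp0] E_Peq[OF pp0] lenx
      by (simp add: integrable_measure_pmf_finite p_def z_def)
    also have "(1 - p) ^ n = (1 - p) ^ (n - z) * (1 - p) ^ z" using zn by (simp add: power_add[symmetric])
    finally show ?thesis by (simp add: algebra_simps)
  qed
  have a1: "1/9 \<le> (1 - p) ^ (n - z)"
  proof -
    have "(1 - p) ^ n \<le> (1 - p) ^ (n - z)" using p0 p1 by (intro power_decreasing) auto
    moreover have "exp (- 2 * p * n) \<le> (1 - p) ^ n" using R2 p0 p1 by simp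
    moreover have "exp (- 2 * p * n) = exp (- 2 * c)" unfolding p_def using n2 by simp
    moreover have "exp (-2) \<le> exp (- 2 * c)" using c1 by simp
    ultimately show ?thesis using exp2 by linarith
  qed
  have a2: "c * eps / 4 \<le> 1 - (1 - p) ^ z"
  proof -
    have "p * z / (1 + p * z) \<le> 1 - (1 - p) ^ z" using R1'[of p z] p0 p1 by simp
    moreover have "p * z / 2 \<le> p * z / (1 + p * z)" using pz2 ce1 eps8 p0 pz0
      by (intro divide_left_mono) (auto simp: add_pos_nonneg)
    ultimately show ?thesis using pz1 by linarith
  qed
  have qlo: "c * eps / 36 \<le> q"
  proof -
    have "(1/9) * (c * eps / 4) \<le> (1 - p) ^ (n - z) * (1 - (1 - p) ^ z)"
      using a1 a2 c0 e0 by (intro mult_mono) auto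
    then show ?thesis unfolding qform by simp
  qed
  have qhi: "q \<le> 1" and q0: "0 \<le> q"
  proof -
    have "(1 - p) ^ (n - z) \<le> 1" "0 \<le> (1 - p) ^ (n - z)" using p0 p1 by (auto intro: power_le_one)
    moreover have "1 - (1 - p) ^ z \<le> 1" "0 \<le> 1 - (1 - p) ^ z" using p0 p1 by (auto intro: power_le_one)
    ultimately show "q \<le> 1" "0 \<le> q" unfolding qform by (auto intro: mult_le_one)
  qed
  have rlo: "gam \<le> (1 - c/n) ^ zeros x - (1 - c/n) ^ n"
  proof -
    have "(1 - p) ^ n = (1 - p) ^ z * (1 - p) ^ (n - z)" using zn by (simp add: power_add[symmetric])
    then have req: "(1 - p) ^ z - (1 - p) ^ n = (1 - p) ^ z * (1 - (1 - p) ^ (n - z))" by (simp add: algebra_simps)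
    have b1: "1/2 \<le> (1 - p) ^ z" using R5[of p z] p0 p1 pz2 ce1 eps8 by simp
    have pnz: "p * (n - z) = c - p * z" unfolding p_def using n2 zn by (simp add: field_simps of_nat_diff)
    have b2: "c / 4 \<le> 1 - (1 - p) ^ (n - z)"
    proof -
      define v where "v = p * real (n - z)"
      have v: "v = c - p * z" unfolding v_def using pnz zn by (simp add: of_nat_diff)
      have pzc: "p * z \<le> c" using pz2 ce2 by linarith
      have v1: "v \<le> 1" "0 \<le> v" using v pzc pz0 c1 by linarith+
      have "v / (1 + v) \<le> 1 - (1 - p) ^ (n - z)" using R1'[of p "n - z"] p0 p1 unfolding v_def by simp
      moreover have "v / 2 \<le> v / (1 + v)" using v1 by (intro divide_left_mono) auto
      moreover have "c / 2 \<le> v"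
      proof -
        have "c * eps \<le> c * (1/2)" using c0 eps8 by (intro mult_left_mono) auto
        then show ?thesis using v pz2 by linarith
      qed
      ultimately show ?thesis by linarith
    qed
    have "(1/2) * (c/4) \<le> (1 - p) ^ z * (1 - (1 - p) ^ (n - z))"
      using b1 b2 c0 by (intro mult_mono) auto
    then show ?thesis using req gam unfolding p_def z_def by simp
  qed
  have Weq: "W = 1 + (F - 1) * p" unfolding W_def by (simp add: algebra_simps)
  have Wz: "W ^ z \<le> 1 + 2 * ((F - 1) * (c * eps))"
  proof -
    have "W ^ z \<le> exp ((F - 1) * p * z)" unfolding Weq using R3[of "(F-1)*p" z] F p0 by simp
    also have "\<dots> \<le> exp ((F - 1) * (c * eps))" using pz2 F by (simp add: mult.assoc)
    also have "\<dots> \<le> 1 + 2 * ((F - 1) * (c * eps))"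
    proof (rule R4)
      show "0 \<le> (F - 1) * (c * eps)" using F c0 e0 by simp
      have "(F - 1) * (c * eps) \<le> F * eps" using F c0 c1 e0 ce1 by (intro mult_mono) auto
      also have "\<dots> \<le> 1" using e1 F by (simp add: field_simps)
      finally show "(F - 1) * (c * eps) \<le> 1" .
    qed
    finally show ?thesis .
  qed
  have Wz3: "W ^ z \<le> 3"
  proof -
    have "(F - 1) * (c * eps) \<le> F * eps" using F c0 c1 e0 ce1 by (intro mult_mono) auto
    also have "\<dots> \<le> 1" using e1 F by (simp add: field_simps)
    finally show ?thesis using Wz by linarith
  qed
  have Wb: "(W ^ z - 1) / (F - 1) \<le> 2 * (c * eps)"
    using Wz F by (simp add: field_simps)
  have red: "measure_pmf.expectation (replicate_pmf k (mutate c n x)) Zl + K * (Df + (Ds - Df) * (1 - (1 - q)^k)) \<le> E"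
    if Zl: "\<And>ys x'. ys \<in> set_pmf (replicate_pmf k (mutate c n x)) \<Longrightarrow> x' \<in> set ys \<Longrightarrow> (\<forall>y\<in>set ys. f y \<le> f x') \<Longrightarrow> Zl ys \<le> real (zeros x') - real (zeros x)" for Zl
    unfolding Ds_def Df_def L_def k_def q_def E_def by (rule reduce[OF x lam F s0 K0 mon Zl[unfolded k_def]])
  define P where "P = 1 - (1 - q)^k"
  have Pb: "0 \<le> P" "P \<le> 1" unfolding P_def using q0 qhi by (auto intro: power_le_one)
  have PR6: "q * k / (1 + q * k) \<le> P" unfolding P_def using R6[OF q0 qhi] .
  have DsDf: "0 \<le> Ds - Df" using Ds0 Dfle by linarith
  have WW: "W = F * (c / real n) + (1 - c / real n)" unfolding W_def p_def ..
  have pos0: "0 < c * eps" using c0 e0 by simp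
  have cek: "0 \<le> c * eps * real k" using c0 e0 by (intro mult_nonneg_nonneg) auto
  have Lk: "lam < real k + 1/2" using klo by linarith
  have dmin: "min (gam ^ k0 / 2) (c * eps) \<le> c * eps" "min (gam ^ k0 / 2) (c * eps) \<le> gam ^ k0 / 2" by auto
  have gk0: "0 < gam ^ k0" using gam c0 by simp
  show ?thesis
  proof (cases "k \<le> k0")
    case True
    have R: "measure_pmf.expectation (replicate_pmf k (mutate c n x)) (Z2 F x) + K * (Df + (Ds - Df) * P) \<le> E"
      unfolding P_def by (rule red) (rule Z2_ok[OF x F pp0])
    have EZ: "measure_pmf.expectation (replicate_pmf k (mutate c n x)) (Z2 F x)
       = ((1 - c/n) ^ zeros x - (1 - c/n) ^ n) ^ k - (k * ((W ^ z - 1) / (F - 1)))"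
      using Z2_E[OF x F pp0] unfolding WW z_def .
    have t1: "gam ^ k0 \<le> ((1 - c/n) ^ zeros x - (1 - c/n) ^ n) ^ k"
    proof -
      have "gam ^ k0 \<le> gam ^ k" using gam c0 c1 True by (intro power_decreasing) auto
      also have "\<dots> \<le> ((1 - c/n) ^ zeros x - (1 - c/n) ^ n) ^ k" using rlo gam c0 by (intro power_mono) auto
      finally show ?thesis .
    qed
    have t2: "k * ((W ^ z - 1) / (F - 1)) \<le> gam ^ k0 / 4"
    proof -
      have "k * ((W ^ z - 1) / (F - 1)) \<le> real k0 * (2 * eps)"
      proof (rule mult_mono)
        show "real k \<le> real k0" using True by simp
        show "(W ^ z - 1) / (F - 1) \<le> 2 * eps" using Wb ce1 by linarith
        show "0 \<le> real k0" by simp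
        have "1 \<le> W ^ z" unfolding Weq using F p0 by (intro one_le_power) simp
        then show "0 \<le> (W ^ z - 1) / (F - 1)" using F by simp
      qed
      then show ?thesis using e2 by linarith
    qed
    have t3: "- (gam ^ k0 / 4) \<le> K * Df"
    proof -
      have lamb: "lam \<le> real k0 + 1" using Lk True by linarith
      have "L \<le> log F (real k0 + 1)" unfolding L_def using lam lamb F by simp
      then have "K * (2 * L + 3) \<le> K * (2 * log F (real k0 + 1) + 3)" using K0 by (intro mult_left_mono) auto
      also have "\<dots> \<le> s * gam ^ k0 / 4" using s2 gk0 by (simp add: field_simps)
      finally have "K * (2 * L + 3) / s \<le> gam ^ k0 / 4" using s0 by (simp add: field_simps)
      moreover have "K * (- (2 * L + 3) / s) \<le> K * Df" using Dfb K0 by (rule mult_left_mono)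
      moreover have "K * (- (2 * L + 3) / s) = - (K * (2 * L + 3) / s)" by (simp add: algebra_simps minus_divide_left)
      ultimately show ?thesis by linarith
    qed
    have t4: "K * Df \<le> K * (Df + (Ds - Df) * P)" using K0 DsDf Pb by (intro mult_left_mono) auto
    show ?thesis unfolding E_def[symmetric] using R EZ t1 t2 t3 t4 dmin by linarith
  next
    case False
    have L1: "1 \<le> L"
    proof -
      have "real k0 + 1 \<le> real k" using False by simp
      then have "F \<le> lam" using kup k0 F by linarith
      then show ?thesis unfolding L_def using F by simp
    qed
    have Ds2: "Ds = 2 * L + 1" using Ds1[OF L1] .
    show ?thesis
    proof (cases "q * k \<le> 1")
      case True
      have R: "measure_pmf.expectation (replicate_pmf k (mutate c n x)) (Z1 F x) + K * (Df + (Ds - Df) * P) \<le> E"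
        unfolding P_def by (rule red) (rule Z1_ok[OF x F pp0])
      have EZ: "measure_pmf.expectation (replicate_pmf k (mutate c n x)) (Z1 F x) = - (k * ((W ^ z - 1) / (F - 1)))"
        using Z1_E[OF x F pp0] unfolding WW z_def .
      have t1: "k * ((W ^ z - 1) / (F - 1)) \<le> k * (2 * (c * eps))" using Wb by (intro mult_left_mono) auto
      have Pq: "q * k / 2 \<le> P"
      proof -
        have qk0: "0 \<le> q * k" using q0 by simp
        have "q * k / 2 \<le> q * k / (1 + q * k)" using True qk0 by (intro divide_left_mono) (auto simp: add_pos_nonneg)
        then show ?thesis using PR6 by linarith
      qed
      have t2: "4 * (c * eps) * k \<le> K * (Ds * P)"
      proof -
        have "c * eps / 36 * k / 2 \<le> q * k / 2" using qlo by (intro divide_right_mono mult_right_mono) auto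
        then have "c * eps * k / 72 \<le> P" using Pq by simp
        moreover note cek
        ultimately have "3 * (c * eps * k / 72) \<le> Ds * P" using Ds2 L1 Pb by (intro mult_mono) auto
        moreover have "0 \<le> 3 * (c * eps * k / 72)" using cek by simp
        ultimately have "100 * (3 * (c * eps * k / 72)) \<le> K * (Ds * P)" using K1
          by (rule_tac mult_mono) auto
        moreover have "4 * (c * eps) * k \<le> 100 * (3 * (c * eps * k / 72))" using cek by simp
        ultimately show ?thesis by linarith
      qed
      have t3: "- (c * eps) \<le> K * Df"
      proof -
        have q0': "0 < q" using qlo pos0 by linarith
        have "real k \<le> 1 / q" using True q0' by (simp add: field_simps mult.commute)
        also have "\<dots> \<le> 36 / (c * eps)" using qlo pos0 by (simp add: field_simps)
        finally have kb: "real k \<le> 36 / (c * eps)" .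
        have lamb: "lam \<le> 72 / (c * eps)" using Lk kb k1 by linarith
        have "L \<le> log F (72 / (c * eps))" unfolding L_def using lam lamb F pos0 by (subst log_le_cancel_iff) auto
        then have "K * (2 * L + 3) \<le> K * (2 * log F (72 / (c * eps)) + 3)" using K0 by (intro mult_left_mono) auto
        also have "\<dots> \<le> s * (c * eps)" using s3 pos0 by (simp add: field_simps)
        finally have "K * (2 * L + 3) / s \<le> c * eps" using s0 by (simp add: field_simps)
        moreover have "K * (- (2 * L + 3) / s) \<le> K * Df" using Dfb K0 by (rule mult_left_mono)
        moreover have "K * (- (2 * L + 3) / s) = - (K * (2 * L + 3) / s)" by (simp add: algebra_simps minus_divide_left)
        ultimately show ?thesis by linarith
      qed
      have t4: "K * Df + K * (Ds * P) \<le> K * (Df + (Ds - Df) * P)"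
      proof -
        have "Df + Ds * P \<le> Df + (Ds - Df) * P" using Dfle Pb by (simp add: algebra_simps mult_nonpos_nonneg)
        then show ?thesis using K0 by (simp add: distrib_left[symmetric] mult_left_mono)
      qed
      have "c * eps \<le> c * eps * k" using pos0 k1 mult_left_mono[of 1 "real k" "c * eps"] by simp
      moreover have "real k * (2 * (c * eps)) = 2 * (c * eps * real k)" "4 * (c * eps) * real k = 4 * (c * eps * real k)"
        by (simp_all add: algebra_simps)
      ultimately show ?thesis unfolding E_def[symmetric] using R EZ t1 t2 t3 t4 dmin by linarith
    next
      case False
      have R: "measure_pmf.expectation (replicate_pmf k (mutate c n x)) (Z3 F x) + K * (Df + (Ds - Df) * P) \<le> E"
        unfolding P_def by (rule red) (rule Z3_ok[OF x F pp0])
      have kA: "real k * (F * (c / real n) + (1 - c / real n)) ^ zeros x \<le> 6 * lam"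
      proof -
        have "real k * W ^ z \<le> (2 * lam) * 3"
          using kup lam Wz3 by (intro mult_mono) (auto simp: Weq p0 F less_imp_le)
        then show ?thesis unfolding WW z_def by simp
      qed
      have EZ: "- log F (6 * lam) \<le> measure_pmf.expectation (replicate_pmf k (mutate c n x)) (Z3 F x)"
        by (rule Z3_E[OF x F pp0 k1 kA])
      have lg: "log F (6 * lam) = log F 6 + L" unfolding L_def using lam by (simp add: log_mult)
      have P2: "1/2 \<le> P"
      proof -
        have "1/2 \<le> q * k / (1 + q * k)" using False by (simp add: field_simps)
        then show ?thesis using PR6 by linarith
      qed
      have t1: "(Ds + Df) / 2 \<le> Df + (Ds - Df) * P"
      proof -
        have "(Ds - Df) * (1/2) \<le> (Ds - Df) * P" using P2 DsDf by (rule mult_left_mono)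
        then show ?thesis by (simp add: field_simps)
      qed
      have t2: "(6 * L + 1) / 8 \<le> (Ds + Df) / 2"
      proof -
        have "(2 * L + 3) / s \<le> (2 * L + 3) / 4" using s1 L0 by (intro divide_left_mono) auto
        moreover have "- (2 * L + 3) / s = - ((2 * L + 3) / s)" by (simp add: minus_divide_left)
        ultimately have "- (2 * L + 3) / 4 \<le> Df" using Dfb by linarith
        then show ?thesis using Ds2 by (simp add: field_simps)
      qed
      have t3: "K * ((6 * L + 1) / 8) \<le> K * (Df + (Ds - Df) * P)" using t1 t2 K0 by (intro mult_left_mono) auto
      have t4: "log F 6 + L + 1 \<le> K * ((6 * L + 1) / 8)"
      proof -
        have "L \<le> (6 * K / 8 - 1) * L + L" using K1 L0 by (simp add: mult_nonneg_nonneg)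
        then show ?thesis using K2 by (simp add: field_simps)
      qed
      have "c * eps \<le> 1" using ce1 eps8 by linarith
      then show ?thesis unfolding E_def[symmetric] using R EZ lg t3 t4 dmin by linarith
    qed
  qed
qed



theorem mainTheorem20:
  fixes c F :: real
  assumes "0 < c" and "c \<le> 1" and "1 < F"
  shows "\<exists>K4 > 0. \<exists>\<epsilon>0 > 0. \<forall>\<epsilon>. 0 < \<epsilon> \<and> \<epsilon> < \<epsilon>0 \<longrightarrow>
           (\<exists>s1 > 0. \<forall>s \<ge> s1. \<exists>\<delta> > 0. \<exists>N. \<forall>n \<ge> N.
              \<forall>x \<in> bitstrings n. \<forall>lam \<ge> 1. \<forall>f. monotone_fun n f \<longrightarrow>
                \<epsilon> * real n / 2 \<le> real (zeros x) \<and> real (zeros x) \<le> \<epsilon> * real n \<longrightarrow>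
                measure_pmf.expectation (sa_step c s F n f x lam)
                  (\<lambda>(x', lam'). G4 F K4 x' lam' - G4 F K4 x lam) \<ge> \<delta>)"
proof -
  note c0 = assms(1) and c1 = assms(2) and F = assms(3)
  define K where "K = max 100 (8 * log F 6 + 8)"
  define k0 :: nat where "k0 = nat \<lceil>2 * F\<rceil>"
  define gam where "gam = c / 8"
  define e0 where "e0 = min (1 / F) (gam ^ k0 / (8 * real k0))"
  have k0: "2 * F \<le> real k0"
  proof -
    have a: "2 * F \<le> of_int \<lceil>2 * F\<rceil>" by (rule le_of_int_ceiling)
    then have "0 \<le> \<lceil>2 * F\<rceil>" using F by linarith
    then have "real k0 = of_int \<lceil>2 * F\<rceil>" unfolding k0_def by simp
    then show ?thesis using a by simp
  qed
  have k0p: "0 < real k0" using k0 F by linarith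
  have gk: "0 < gam ^ k0" unfolding gam_def using c0 by simp
  have K1: "100 \<le> K" and K2: "8 * log F 6 + 8 \<le> K" unfolding K_def by auto
  have e0p: "0 < e0" unfolding e0_def using F gk k0p by simp
  show ?thesis
  proof (rule exI[of _ K], intro conjI)
    show "K > 0" using K1 by simp
    show "\<exists>\<epsilon>0 > 0. \<forall>\<epsilon>. 0 < \<epsilon> \<and> \<epsilon> < \<epsilon>0 \<longrightarrow>
           (\<exists>s1 > 0. \<forall>s \<ge> s1. \<exists>\<delta> > 0. \<exists>N. \<forall>n \<ge> N.
              \<forall>x \<in> bitstrings n. \<forall>lam \<ge> 1. \<forall>f. monotone_fun n f \<longrightarrow>
                \<epsilon> * real n / 2 \<le> real (zeros x) \<and> real (zeros x) \<le> \<epsilon> * real n \<longrightarrow>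
                measure_pmf.expectation (sa_step c s F n f x lam)
                  (\<lambda>(x', lam'). G4 F K x' lam' - G4 F K x lam) \<ge> \<delta>)"
    proof (rule exI[of _ e0], intro conjI allI impI)
      show "0 < e0" by (rule e0p)
      fix eps assume eps: "0 < eps \<and> eps < e0"
      have e1: "eps \<le> 1 / F" using eps unfolding e0_def by simp
      have e2: "8 * real k0 * eps \<le> gam ^ k0"
      proof -
        have "eps \<le> gam ^ k0 / (8 * real k0)" using eps unfolding e0_def by simp
        then show ?thesis using k0p by (simp add: field_simps)
      qed
      define s1 where "s1 = max 4 (max (4 * K * (2 * log F (real k0 + 1) + 3) / gam ^ k0)
                                        (K * (2 * log F (72 / (c * eps)) + 3) / (c * eps)))"
      show "\<exists>s1 > 0. \<forall>s \<ge> s1. \<exists>\<delta> > 0. \<exists>N. \<forall>n \<ge> N.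
              \<forall>x \<in> bitstrings n. \<forall>lam \<ge> 1. \<forall>f. monotone_fun n f \<longrightarrow>
                eps * real n / 2 \<le> real (zeros x) \<and> real (zeros x) \<le> eps * real n \<longrightarrow>
                measure_pmf.expectation (sa_step c s F n f x lam)
                  (\<lambda>(x', lam'). G4 F K x' lam' - G4 F K x lam) \<ge> \<delta>"
      proof (rule exI[of _ s1], intro conjI allI impI)
        show "0 < s1" unfolding s1_def by simp
        fix s assume s: "s1 \<le> s"
        show "\<exists>\<delta> > 0. \<exists>N. \<forall>n \<ge> N.
              \<forall>x \<in> bitstrings n. \<forall>lam \<ge> 1. \<forall>f. monotone_fun n f \<longrightarrow>
                eps * real n / 2 \<le> real (zeros x) \<and> real (zeros x) \<le> eps * real n \<longrightarrow>
                measure_pmf.expectation (sa_step c s F n f x lam)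
                  (\<lambda>(x', lam'). G4 F K x' lam' - G4 F K x lam) \<ge> \<delta>"
        proof (rule exI[of _ "min (gam ^ k0 / 2) (c * eps)"], intro conjI exI[of _ "2::nat"] allI impI ballI)
          show "0 < min (gam ^ k0 / 2) (c * eps)" using gk c0 eps by simp
          fix n :: nat and x :: "bool list" and lam :: real and f :: "bool list \<Rightarrow> real"
          assume n: "2 \<le> n" and x: "x \<in> bitstrings n" and lam: "1 \<le> lam" and mon: "monotone_fun n f"
            and z: "eps * real n / 2 \<le> real (zeros x) \<and> real (zeros x) \<le> eps * real n"
          show "min (gam ^ k0 / 2) (c * eps) \<le> measure_pmf.expectation (sa_step c s F n f x lam)
                  (\<lambda>(x', lam'). G4 F K x' lam' - G4 F K x lam)"
            by (rule core[OF c0 c1 F K1 K2 k0 gam_def _ e1 e2 _ _ _ n x lam mon])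
               (use eps s z in \<open>auto simp: s1_def\<close>)
        qed
      qed
    qed
  qed
qed


end
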